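(* Let $(X,d_X)$, $(Y,d_Y)$ be metric spaces with $Y$ separable, and let $1\le\xi<\omega_1$. For every $f:X\to Y$ the following are equivalent: (i) $f$ is of Baire class $\xi$; (ii) there is a sequence $\langle f_k:k\in\omega\rangle$ converging uniformly to $f$ such that each $f_k$ is locally constant on some $\mathbf{\Sigma}^0_{\xi+1}$-partition of $X$; (iii) there is a sequence $\langle f_k:k\in\omega\rangle$ converging uniformly to $f$ such that each $f_k$ is locally Lipschitz on some $\mathbf{\Sigma}^0_{\xi+1}$-partition of $X$; (iv) there is a sequence $\langle f_k:k\in\omega\rangle$ converging uniformly to $f$ such that each $f_k$ is locally continuous on some $\mathbf{\Sigma}^0_{\xi+1}$-partition of $X$; (v) there is a sequence $\langle f_k:k\in\omega\rangle$ converging uniformly to $f$ such that each $f_k$ is a $\mathbf{\Delta}^0_{\xi+1}$-function.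
   Context: Work in ZF plus countable choice over the reals. $f$ is of Baire class $1$ if $f^{-1}(U)\in\mathbf{\Sigma}^0_2(X)$ for every open $U\subseteq Y$; for $1<\xi<\omega_1$, $f$ is of Baire class $\xi$ if it is the pointwise limit of functions $f_n:X\to Y$ each of Baire class $\xi_n$ for some $1\le\xi_n<\xi$. A $\mathbf{\Gamma}$-partition of $X$ is a family $\langle C_n:n<N\rangle$, $1\le N\le\omega$, of nonempty pairwise disjoint sets in $\mathbf{\Gamma}$ with union $X$. For a set $\mathcal{F}$ of functions $X\to Y$, a function $g:X\to Y$ is locally in $\mathcal{F}$ on the partition $\langle C_n:n<N\rangle$ if there are $g_n\in\mathcal{F}$ with $g\restriction C_n=g_n\restriction C_n$ for all $n<N$ ("locally constant/Lipschitz/continuous" means $\mathcal{F}$ is the set of constant/Lipschitz/continuous functions $X\to Y$). $g$ is a $\mathbf{\Delta}^0_\eta$-function if $g^{-1}(A)\in\mathbf{\Sigma}^0_\eta(X)$ for every $A\in\mathbf{\Sigma}^0_\eta(Y)$. *)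

theory Defs
  imports "HOL-Analysis.Analysis" "HOL-Library.Extended_Nat"
begin

text \<open>Ordinals are represented by elements of an arbitrary well-ordered type 'i.
  The least element plays the role of 0; ord_one is the ordinal 1.\<close>

definition ord_zero :: "'i::wellorder \<Rightarrow> bool" where
  "ord_zero \<xi> \<longleftrightarrow> (\<forall>\<eta>. \<xi> \<le> \<eta>)"

definition ord_one :: "'i::wellorder \<Rightarrow> bool" where
  "ord_one \<xi> \<longleftrightarrow> \<not> ord_zero \<xi> \<and> (\<forall>\<eta><\<xi>. ord_zero \<eta>)"

inductive Sigma0 :: "'i::wellorder \<Rightarrow> 'a::topological_space set \<Rightarrow> bool" where
  Sigma0_open: "ord_one (\<xi>::'i) \<Longrightarrow> open A \<Longrightarrow> Sigma0 \<xi> A"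
| Sigma0_union: "\<not> ord_zero (\<xi>::'i) \<Longrightarrow> \<not> ord_one \<xi> \<Longrightarrow>
     (\<forall>n. \<not> ord_zero ((\<eta>::nat \<Rightarrow> 'i) n) \<and> \<eta> n < \<xi> \<and> Sigma0 (\<eta> n) (- A n)) \<Longrightarrow>
     Sigma0 \<xi> (\<Union>n. A n)"

text \<open>Sigma^0_{xi+1}: countable unions of Pi^0_eta sets, 1 \<le> eta < xi+1.\<close>

definition Sigma0_succ :: "'i::wellorder \<Rightarrow> 'a::topological_space set \<Rightarrow> bool" where
  "Sigma0_succ \<xi> B \<longleftrightarrow> (\<exists>(A::nat \<Rightarrow> 'a set) (\<eta>::nat \<Rightarrow> 'i).
      (\<forall>n. \<not> ord_zero (\<eta> n) \<and> \<eta> n \<le> \<xi> \<and> Sigma0 (\<eta> n) (- A n)) \<and> B = (\<Union>n. A n))"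

inductive baire_class :: "'i::wellorder \<Rightarrow> ('a::metric_space \<Rightarrow> 'b::metric_space) \<Rightarrow> bool" where
  baire_one: "ord_one (\<xi>::'i) \<Longrightarrow> (\<forall>U. open U \<longrightarrow> Sigma0_succ \<xi> (f -` U)) \<Longrightarrow> baire_class \<xi> f"
| baire_lim: "\<not> ord_zero (\<xi>::'i) \<Longrightarrow> \<not> ord_one \<xi> \<Longrightarrow>
     (\<forall>n. \<not> ord_zero ((\<eta>::nat \<Rightarrow> 'i) n) \<and> \<eta> n < \<xi> \<and> baire_class (\<eta> n) (fs n)) \<Longrightarrow>
     (\<forall>x. (\<lambda>n. fs n x) \<longlonglongrightarrow> f x) \<Longrightarrow> baire_class \<xi> f"

definition Sigma_succ_partition :: "'i::wellorder \<Rightarrow> enat \<Rightarrow> (nat \<Rightarrow> 'a::topological_space set) \<Rightarrow> bool" where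
  "Sigma_succ_partition \<xi> N C \<longleftrightarrow> 1 \<le> N \<and>
     (\<forall>n. enat n < N \<longrightarrow> C n \<noteq> {} \<and> Sigma0_succ \<xi> (C n)) \<and>
     (\<forall>m n. enat m < N \<longrightarrow> enat n < N \<longrightarrow> m \<noteq> n \<longrightarrow> C m \<inter> C n = {}) \<and>
     (\<Union>{C n |n. enat n < N}) = UNIV"

definition locally_in_on :: "(('a \<Rightarrow> 'b) \<Rightarrow> bool) \<Rightarrow> enat \<Rightarrow> (nat \<Rightarrow> 'a set) \<Rightarrow> ('a \<Rightarrow> 'b) \<Rightarrow> bool" where
  "locally_in_on F N C g \<longleftrightarrow> (\<forall>n. enat n < N \<longrightarrow> (\<exists>h. F h \<and> (\<forall>x\<in>C n. g x = h x)))"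

definition locally_on_Sigma_succ_partition ::
    "'i::wellorder \<Rightarrow> (('a::topological_space \<Rightarrow> 'b) \<Rightarrow> bool) \<Rightarrow> ('a \<Rightarrow> 'b) \<Rightarrow> bool" where
  "locally_on_Sigma_succ_partition \<xi> F g \<longleftrightarrow>
     (\<exists>N C. Sigma_succ_partition \<xi> N C \<and> locally_in_on F N C g)"

definition const_fun :: "('a \<Rightarrow> 'b) \<Rightarrow> bool" where
  "const_fun h \<longleftrightarrow> (\<exists>c. h = (\<lambda>_. c))"

definition lipschitz_fun :: "('a::metric_space \<Rightarrow> 'b::metric_space) \<Rightarrow> bool" where
  "lipschitz_fun h \<longleftrightarrow> (\<exists>L. L-lipschitz_on UNIV h)"

definition cont_fun :: "('a::topological_space \<Rightarrow> 'b::topological_space) \<Rightarrow> bool" where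
  "cont_fun h \<longleftrightarrow> continuous_on UNIV h"

definition Delta_succ_function :: "'i::wellorder \<Rightarrow> ('a::topological_space \<Rightarrow> 'b::topological_space) \<Rightarrow> bool" where
  "Delta_succ_function \<xi> g \<longleftrightarrow> (\<forall>A::'b set. Sigma0_succ \<xi> A \<longrightarrow> Sigma0_succ \<xi> (g -` A))"

end

theory Submission
  imports Defs
begin


lemma ord_one_ex: "\<not> ord_zero (\<xi>::'i::wellorder) \<Longrightarrow> \<exists>w. ord_one w \<and> w \<le> \<xi>"
proof -
  assume a: "\<not> ord_zero \<xi>"
  define w where "w = (LEAST x::'i. \<not> ord_zero x)"
  have "\<not> ord_zero w" unfolding w_def by (rule LeastI[of _ \<xi>]) (rule a)
  moreover have "\<forall>\<eta><w. ord_zero \<eta>" unfolding w_def using not_less_Least by blast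
  moreover have "w \<le> \<xi>" unfolding w_def by (rule Least_le) (rule a)
  ultimately show ?thesis unfolding ord_one_def by blast
qed

lemma ord_one_le: "ord_one (a::'i::wellorder) \<Longrightarrow> \<not> ord_zero b \<Longrightarrow> a \<le> b"
  unfolding ord_one_def using not_le by blast

lemma not_one_if_less: "\<not> ord_zero (\<eta>::'i::wellorder) \<Longrightarrow> \<eta> < \<xi> \<Longrightarrow> \<not> ord_one \<xi> \<and> \<not> ord_zero \<xi>"
  unfolding ord_one_def ord_zero_def by (meson less_le_not_le order.trans)

lemma not_zero_mono: "\<not> ord_zero (\<eta>::'i::wellorder) \<Longrightarrow> \<eta> \<le> \<xi> \<Longrightarrow> \<not> ord_zero \<xi>"
  unfolding ord_zero_def by (meson order.trans)

lemma Sigma0_nz: "Sigma0 \<xi> A \<Longrightarrow> \<not> ord_zero \<xi>"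
  by (induction rule: Sigma0.induct) (auto simp: ord_one_def)

lemma closed_inner:
  fixes A :: "'a::metric_space set"
  assumes "open A"
  shows "A = (\<Union>n. - (\<Union>z\<in>-A. ball z (1/(Suc n))))" and "\<And>n. open (\<Union>z\<in>-A. ball z (1/(Suc n)))"
proof -
  show "\<And>n. open (\<Union>z\<in>-A. ball z (1/(Suc n)))" by auto
  show "A = (\<Union>n. - (\<Union>z\<in>-A. ball z (1/(Suc n))))"
  proof
    show "A \<subseteq> (\<Union>n. - (\<Union>z\<in>-A. ball z (1/(Suc n))))"
    proof
      fix x assume "x \<in> A"
      then obtain e where e: "e > 0" "ball x e \<subseteq> A" using assms open_contains_ball by blast
      obtain n where n: "1/real (Suc n) < e" using e(1) nat_approx_posE by blast
      have "x \<notin> (\<Union>z\<in>-A. ball z (1/(Suc n)))"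
      proof
        assume "x \<in> (\<Union>z\<in>-A. ball z (1/(Suc n)))"
        then obtain z where "z \<notin> A" "dist z x < 1/Suc n" by auto
        then have "z \<in> ball x e" using n by (simp add: dist_commute)
        then show False using e \<open>z \<notin> A\<close> by auto
      qed
      then show "x \<in> (\<Union>n. - (\<Union>z\<in>-A. ball z (1/(Suc n))))" by blast
    qed
  next
    show "(\<Union>n. - (\<Union>z\<in>-A. ball z (1/(Suc n)))) \<subseteq> A"
    proof
      fix x assume "x \<in> (\<Union>n. - (\<Union>z\<in>-A. ball z (1/(Suc n))))"
      then obtain n where "x \<notin> (\<Union>z\<in>-A. ball z (1/(Suc n)))" by blast
      then show "x \<in> A" by (metis ComplI UN_I centre_in_ball of_nat_0_less_iff zero_less_Suc zero_less_divide_1_iff)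
    qed
  qed
qed

lemma closed_outer:
  fixes P :: "'a::metric_space set"
  assumes "closed P"
  shows "P = (\<Inter>n. (\<Union>z\<in>P. ball z (1/(Suc n))))" and "\<And>n. open (\<Union>z\<in>P. ball z (1/(Suc n)))"
proof -
  show "\<And>n. open (\<Union>z\<in>P. ball z (1/(Suc n)))" by auto
  show "P = (\<Inter>n. (\<Union>z\<in>P. ball z (1/(Suc n))))"
  proof
    show "P \<subseteq> (\<Inter>n. (\<Union>z\<in>P. ball z (1/(Suc n))))" by force
    show "(\<Inter>n. (\<Union>z\<in>P. ball z (1/(Suc n)))) \<subseteq> P"
    proof
      fix x assume x: "x \<in> (\<Inter>n. (\<Union>z\<in>P. ball z (1/(Suc n))))"
      have "x \<in> closure P" unfolding closure_approachable
      proof (intro allI impI)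
        fix e :: real assume "e > 0"
        then obtain n where n: "1/real (Suc n) < e" using nat_approx_posE by blast
        from x obtain z where "z \<in> P" "dist z x < 1/Suc n" by (auto simp: dist_commute)
        then show "\<exists>y\<in>P. dist y x < e" using n by (meson order.strict_trans)
      qed
      then show "x \<in> P" using assms by (simp add: closure_closed)
    qed
  qed
qed


lemma Sigma0_high:
  assumes "Sigma0 (\<xi>::'i::wellorder) (A::'a::topological_space set)" "\<not> ord_one \<xi>"
  shows "\<exists>(An::nat\<Rightarrow>'a set) (\<eta>::nat\<Rightarrow>'i). (\<forall>n. \<not> ord_zero (\<eta> n) \<and> \<eta> n < \<xi> \<and> Sigma0 (\<eta> n) (- An n)) \<and> A = (\<Union>n. An n)"
  using assms by (cases rule: Sigma0.cases) blast+

lemma Sigma0_one_open: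
  assumes "Sigma0 (\<eta>::'i::wellorder) A" "ord_one \<eta>"
  shows "open A"
  using assms by (cases rule: Sigma0.cases) auto

lemma Sigma0_mono:
  fixes A :: "'a::metric_space set"
  assumes "Sigma0 (\<eta>::'i::wellorder) A" "\<eta> \<le> \<zeta>"
  shows "Sigma0 \<zeta> A"
proof (cases "\<eta> = \<zeta>")
  case True then show ?thesis using assms by simp
next
  case False
  then have lt: "\<eta> < \<zeta>" using assms(2) by simp
  have nz: "\<not> ord_zero \<eta>" using Sigma0_nz[OF assms(1)] .
  have hz: "\<not> ord_one \<zeta>" "\<not> ord_zero \<zeta>" using not_one_if_less[OF nz lt] by auto
  show ?thesis
  proof (cases "ord_one \<eta>")
    case True
    then have op: "open A" using Sigma0_one_open assms(1) by blast
    let ?F = "\<lambda>n. - (\<Union>z\<in>-A. ball z (1/(Suc n)))"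
    have "A = (\<Union>n. ?F n)" using closed_inner(1)[OF op] .
    moreover have "Sigma0 \<zeta> (\<Union>n. ?F n)"
      apply (rule Sigma0_union[where \<eta>="\<lambda>_. \<eta>"])
      using hz lt nz True by (auto intro!: Sigma0_open)
    ultimately show ?thesis by simp
  next
    case False
    obtain An :: "nat \<Rightarrow> 'a set" and \<eta>' :: "nat \<Rightarrow> 'i" where r: "\<forall>n. \<not> ord_zero (\<eta>' n) \<and> \<eta>' n < \<eta> \<and> Sigma0 (\<eta>' n) (- An n)" "A = (\<Union>n. An n)"
      using Sigma0_high[OF assms(1) False] by blast
    show ?thesis unfolding r(2)
      apply (rule Sigma0_union[where \<eta>=\<eta>'])
      using hz r(1) lt by (auto intro: less_trans)
  qed
qed

lemma Sigma0_succ_of_Pi: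
  assumes "Sigma0 (\<eta>::'i::wellorder) (- A)" "\<eta> \<le> \<zeta>"
  shows "Sigma0_succ \<zeta> A"
  unfolding Sigma0_succ_def
  apply (rule exI[where x="\<lambda>_. A"], rule exI[where x="\<lambda>_. \<eta>"])
  using assms Sigma0_nz[OF assms(1)] by auto

lemma Sigma0_succ_of_Sigma0:
  fixes A :: "'a::metric_space set"
  assumes "Sigma0 (\<eta>::'i::wellorder) A" "\<eta> \<le> \<zeta>"
  shows "Sigma0_succ \<zeta> A"
proof (cases "ord_one \<eta>")
  case True
  then have op: "open A" using Sigma0_one_open assms(1) by blast
  let ?F = "\<lambda>n. - (\<Union>z\<in>-A. ball z (1/(Suc n)))"
  have "A = (\<Union>n. ?F n)" using closed_inner(1)[OF op] .
  moreover have "Sigma0_succ \<zeta> (\<Union>n. ?F n)"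
    unfolding Sigma0_succ_def
    apply (rule exI[where x="?F"], rule exI[where x="\<lambda>_. \<eta>"])
    using True assms(2) by (auto intro!: Sigma0_open simp: ord_one_def)
  ultimately show ?thesis by simp
next
  case False
  obtain An :: "nat \<Rightarrow> 'a set" and \<eta>' :: "nat \<Rightarrow> 'i" where r: "\<forall>n. \<not> ord_zero (\<eta>' n) \<and> \<eta>' n < \<eta> \<and> Sigma0 (\<eta>' n) (- An n)" "A = (\<Union>n. An n)"
    using Sigma0_high[OF assms(1) False] by blast
  show ?thesis unfolding Sigma0_succ_def
    apply (rule exI[where x=An], rule exI[where x=\<eta>'])
    using r assms(2) by (auto intro: order.trans less_imp_le)
qed

lemma Sigma0_Un:
  assumes "Sigma0 (\<eta>::'i::wellorder) (A::'a::topological_space set)" "Sigma0 \<eta> B"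
  shows "Sigma0 \<eta> (A \<union> B)"
proof (cases "ord_one \<eta>")
  case True
  then have "open A" "open B" using assms Sigma0_one_open by blast+
  then show ?thesis using True by (auto intro: Sigma0_open)
next
  case False
  obtain An :: "nat \<Rightarrow> 'a set" and \<eta>a :: "nat \<Rightarrow> 'i" where a: "\<forall>n. \<not> ord_zero (\<eta>a n) \<and> \<eta>a n < \<eta> \<and> Sigma0 (\<eta>a n) (- An n)" "A = (\<Union>n. An n)"
    using Sigma0_high[OF assms(1) False] by blast
  obtain Bn :: "nat \<Rightarrow> 'a set" and \<eta>b :: "nat \<Rightarrow> 'i" where b: "\<forall>n. \<not> ord_zero (\<eta>b n) \<and> \<eta>b n < \<eta> \<and> Sigma0 (\<eta>b n) (- Bn n)" "B = (\<Union>n. Bn n)"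
    using Sigma0_high[OF assms(2) False] by blast
  let ?C = "\<lambda>n. if even n then An (n div 2) else Bn (n div 2)"
  let ?e = "\<lambda>n. if even n then \<eta>a (n div 2) else \<eta>b (n div 2)"
  have eq: "A \<union> B = (\<Union>n. ?C n)"
  proof
    show "A \<union> B \<subseteq> (\<Union>n. ?C n)"
    proof
      fix x assume "x \<in> A \<union> B"
      then show "x \<in> (\<Union>n. ?C n)"
      proof
        assume "x \<in> A" then obtain n where "x \<in> An n" using a by auto
        then show ?thesis by (intro UN_I[of "2*n"]) auto
      next
        assume "x \<in> B" then obtain n where "x \<in> Bn n" using b by auto
        then show ?thesis by (intro UN_I[of "2*n+1"]) auto
      qed
    qed
    show "(\<Union>n. ?C n) \<subseteq> A \<union> B" using a b by (auto split: if_splits)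
  qed
  have nz: "\<not> ord_zero \<eta>" using Sigma0_nz[OF assms(1)] .
  show ?thesis unfolding eq
    apply (rule Sigma0_union[where \<eta>="?e"])
    using nz False a(1) b(1) by auto
qed


lemma Sigma0_succ_UN:
  assumes "\<And>n. Sigma0_succ (\<xi>::'i::wellorder) ((B::nat \<Rightarrow> 'a::topological_space set) n)"
  shows "Sigma0_succ \<xi> (\<Union>n. B n)"
proof -
  have "\<forall>n. \<exists>(A::nat \<Rightarrow> 'a set) (\<eta>::nat \<Rightarrow> 'i). (\<forall>j. \<not> ord_zero (\<eta> j) \<and> \<eta> j \<le> \<xi> \<and> Sigma0 (\<eta> j) (- A j)) \<and> B n = (\<Union>j. A j)"
    using assms unfolding Sigma0_succ_def by blast
  then obtain A :: "nat \<Rightarrow> nat \<Rightarrow> 'a set" and \<eta> :: "nat \<Rightarrow> nat \<Rightarrow> 'i" where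
    r: "\<And>n j. \<not> ord_zero (\<eta> n j) \<and> \<eta> n j \<le> \<xi> \<and> Sigma0 (\<eta> n j) (- A n j)" "\<And>n. B n = (\<Union>j. A n j)"
    by metis
  let ?A = "\<lambda>c. A (fst (prod_decode c)) (snd (prod_decode c))"
  let ?e = "\<lambda>c. \<eta> (fst (prod_decode c)) (snd (prod_decode c))"
  have eq: "(\<Union>n. B n) = (\<Union>c. ?A c)"
  proof
    show "(\<Union>n. B n) \<subseteq> (\<Union>c. ?A c)"
    proof
      fix x assume "x \<in> (\<Union>n. B n)"
      then obtain n j where "x \<in> A n j" using r(2) by auto
      then show "x \<in> (\<Union>c. ?A c)" by (intro UN_I[of "prod_encode (n,j)"]) auto
    qed
    show "(\<Union>c. ?A c) \<subseteq> (\<Union>n. B n)" using r(2) by auto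
  qed
  show ?thesis unfolding eq Sigma0_succ_def
    by (rule exI[where x="?A"], rule exI[where x="?e"]) (use r(1) in auto)
qed

lemma Sigma0_succ_Un:
  assumes "Sigma0_succ (\<xi>::'i::wellorder) (A::'a::topological_space set)" "Sigma0_succ \<xi> B"
  shows "Sigma0_succ \<xi> (A \<union> B)"
proof -
  have "A \<union> B = (\<Union>n::nat. if n = 0 then A else B)"
    apply (rule set_eqI) apply (rule iffI)
     apply (erule UnE)
      apply (rule_tac a=0 in UN_I, simp, simp)
     apply (rule_tac a=1 in UN_I, simp, simp)
    apply (auto split: if_splits)
    done
  moreover have "Sigma0_succ \<xi> (\<Union>n::nat. if n = 0 then A else B)"
    by (rule Sigma0_succ_UN) (use assms in auto)
  ultimately show ?thesis by simp
qed

lemma Sigma0_succ_Int: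
  assumes "Sigma0_succ (\<xi>::'i::wellorder) (A::'a::metric_space set)" "Sigma0_succ \<xi> B"
  shows "Sigma0_succ \<xi> (A \<inter> B)"
proof -
  obtain An :: "nat \<Rightarrow> 'a set" and \<eta>a :: "nat \<Rightarrow> 'i" where
    a: "\<forall>n. \<not> ord_zero (\<eta>a n) \<and> \<eta>a n \<le> \<xi> \<and> Sigma0 (\<eta>a n) (- An n)" "A = (\<Union>n. An n)"
    using assms(1) unfolding Sigma0_succ_def by blast
  obtain Bn :: "nat \<Rightarrow> 'a set" and \<eta>b :: "nat \<Rightarrow> 'i" where
    b: "\<forall>n. \<not> ord_zero (\<eta>b n) \<and> \<eta>b n \<le> \<xi> \<and> Sigma0 (\<eta>b n) (- Bn n)" "B = (\<Union>n. Bn n)"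
    using assms(2) unfolding Sigma0_succ_def by blast
  have "A \<inter> B = (\<Union>n. \<Union>m. An n \<inter> Bn m)" using a b by auto
  also have "Sigma0_succ \<xi> \<dots>"
  proof (intro Sigma0_succ_UN)
    fix n m
    let ?z = "max (\<eta>a n) (\<eta>b m)"
    have "Sigma0 ?z (- An n)" using a(1) Sigma0_mono by (metis max.cobounded1)
    moreover have "Sigma0 ?z (- Bn m)" using b(1) Sigma0_mono by (metis max.cobounded2)
    ultimately have "Sigma0 ?z (- (An n \<inter> Bn m))" using Sigma0_Un by (metis Compl_Int)
    moreover have "?z \<le> \<xi>" using a(1) b(1) by simp
    ultimately show "Sigma0_succ \<xi> (An n \<inter> Bn m)" by (rule Sigma0_succ_of_Pi)
  qed
  finally show ?thesis .
qed

lemma Sigma0_succ_open: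
  assumes "\<not> ord_zero (\<xi>::'i::wellorder)" "open (U::'a::metric_space set)"
  shows "Sigma0_succ \<xi> U"
proof -
  obtain w where w: "ord_one w" "w \<le> \<xi>" using ord_one_ex[OF assms(1)] by blast
  show ?thesis using w assms(2) by (intro Sigma0_succ_of_Sigma0[of w]) (auto intro: Sigma0_open)
qed

lemma Sigma0_succ_UNIV:
  assumes "\<not> ord_zero (\<xi>::'i::wellorder)"
  shows "Sigma0_succ \<xi> (UNIV::'a::metric_space set)" "Sigma0_succ \<xi> ({}::'a set)"
  using Sigma0_succ_open[OF assms] by auto

lemma Sigma0_vimage:
  assumes "Sigma0 (\<xi>::'i::wellorder) (A::'b::topological_space set)" "continuous_on UNIV (h::'a::topological_space \<Rightarrow> 'b)"
  shows "Sigma0 \<xi> (h -` A)"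
  using assms(1)
proof (induction rule: Sigma0.induct)
  case (Sigma0_open \<xi> A)
  then show ?case using assms(2) by (auto intro!: Sigma0.Sigma0_open open_vimage)
next
  case (Sigma0_union \<xi> \<eta> A)
  have "h -` (\<Union>n. A n) = (\<Union>n. h -` A n)" by auto
  then show ?case using Sigma0_union by (auto intro!: Sigma0.Sigma0_union[where \<eta>=\<eta>] simp: vimage_Compl)
qed

lemma Sigma0_succ_vimage:
  assumes "Sigma0_succ (\<xi>::'i::wellorder) (A::'b::topological_space set)" "continuous_on UNIV (h::'a::topological_space \<Rightarrow> 'b)"
  shows "Sigma0_succ \<xi> (h -` A)"
proof -
  obtain An :: "nat \<Rightarrow> 'b set" and \<eta>a :: "nat \<Rightarrow> 'i" where
    a: "\<forall>n. \<not> ord_zero (\<eta>a n) \<and> \<eta>a n \<le> \<xi> \<and> Sigma0 (\<eta>a n) (- An n)" "A = (\<Union>n. An n)"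
    using assms(1) unfolding Sigma0_succ_def by blast
  have "\<forall>n. Sigma0 (\<eta>a n) (- (h -` An n))" using a(1) Sigma0_vimage[OF _ assms(2)] by (metis vimage_Compl)
  then show ?thesis unfolding Sigma0_succ_def a(2) vimage_UN
    by (intro exI[where x="\<lambda>n. h -` An n"] exI[where x=\<eta>a]) (use a(1) in auto)
qed

lemma Sigma0_of_succ:
  assumes "\<And>n. Sigma0_succ ((\<eta>::nat \<Rightarrow> 'i::wellorder) n) ((B::nat \<Rightarrow> 'a::topological_space set) n)"
    "\<And>n. \<eta> n < \<xi>"
  shows "Sigma0 \<xi> (\<Union>n. B n)"
proof -
  have "\<forall>n. \<exists>(A::nat \<Rightarrow> 'a set) (\<theta>::nat \<Rightarrow> 'i). (\<forall>j. \<not> ord_zero (\<theta> j) \<and> \<theta> j \<le> \<eta> n \<and> Sigma0 (\<theta> j) (- A j)) \<and> B n = (\<Union>j. A j)"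
    using assms unfolding Sigma0_succ_def by blast
  then obtain A :: "nat \<Rightarrow> nat \<Rightarrow> 'a set" and \<theta> :: "nat \<Rightarrow> nat \<Rightarrow> 'i" where
    r: "\<And>n j. \<not> ord_zero (\<theta> n j) \<and> \<theta> n j \<le> \<eta> n \<and> Sigma0 (\<theta> n j) (- A n j)" "\<And>n. B n = (\<Union>j. A n j)"
    by metis
  let ?A = "\<lambda>c. A (fst (prod_decode c)) (snd (prod_decode c))"
  let ?e = "\<lambda>c. \<theta> (fst (prod_decode c)) (snd (prod_decode c))"
  have eq: "(\<Union>n. B n) = (\<Union>c. ?A c)"
  proof
    show "(\<Union>n. B n) \<subseteq> (\<Union>c. ?A c)"
    proof
      fix x assume "x \<in> (\<Union>n. B n)"
      then obtain n j where "x \<in> A n j" using r(2) by auto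
      then show "x \<in> (\<Union>c. ?A c)" by (intro UN_I[of "prod_encode (n,j)"]) auto
    qed
    show "(\<Union>c. ?A c) \<subseteq> (\<Union>n. B n)" using r(2) by auto
  qed
  have lt: "\<And>c. ?e c < \<xi>" using r(1) assms(2) by (meson le_less_trans)
  have hz: "\<not> ord_one \<xi>" "\<not> ord_zero \<xi>" using not_one_if_less[OF _ lt] r(1) by blast+
  show ?thesis unfolding eq
    by (rule Sigma0_union[where \<eta>="?e"]) (use hz lt r(1) in auto)
qed

lemma Pi_dec:
  fixes P :: "'a::metric_space set"
  assumes "Sigma0 (\<eta>::'i::wellorder) (- P)" "\<eta> \<le> \<xi>" "\<not> ord_one \<xi>"
  shows "\<exists>(S::nat \<Rightarrow> 'a set) (\<theta>::nat \<Rightarrow> 'i). (\<forall>l. \<not> ord_zero (\<theta> l) \<and> \<theta> l < \<xi> \<and> Sigma0 (\<theta> l) (S l)) \<and> P = (\<Inter>l. S l)"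
proof (cases "ord_one \<eta>")
  case True
  then have "open (- P)" using Sigma0_one_open assms(1) by blast
  then have cl: "closed P" by (simp add: closed_open)
  have "\<eta> < \<xi>" using assms(2,3) True by (metis order.order_iff_strict)
  then show ?thesis using closed_outer[OF cl] True
    by (intro exI[where x="\<lambda>n. (\<Union>z\<in>P. ball z (1/(Suc n)))"] exI[where x="\<lambda>_. \<eta>"])
       (auto intro!: Sigma0_open simp: ord_one_def)
next
  case False
  obtain An :: "nat \<Rightarrow> 'a set" and \<eta>' :: "nat \<Rightarrow> 'i" where
    r: "\<forall>n. \<not> ord_zero (\<eta>' n) \<and> \<eta>' n < \<eta> \<and> Sigma0 (\<eta>' n) (- An n)" "- P = (\<Union>n. An n)"
    using Sigma0_high[OF assms(1) False] by blast
  have "P = (\<Inter>n. - An n)" using r(2) by (metis Compl_UN double_complement)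
  then show ?thesis using r(1) assms(2)
    by (intro exI[where x="\<lambda>n. - An n"] exI[where x=\<eta>']) (auto intro: less_le_trans)
qed

lemma Dec:
  fixes B :: "'a::metric_space set"
  assumes "Sigma0_succ (\<xi>::'i::wellorder) B" "\<not> ord_one \<xi>"
  shows "\<exists>(S::nat \<Rightarrow> nat \<Rightarrow> 'a set) (\<theta>::nat \<Rightarrow> nat \<Rightarrow> 'i).
     (\<forall>j l. \<not> ord_zero (\<theta> j l) \<and> \<theta> j l < \<xi> \<and> Sigma0 (\<theta> j l) (S j l)) \<and> B = (\<Union>j. \<Inter>l. S j l)"
proof -
  obtain An :: "nat \<Rightarrow> 'a set" and \<eta>a :: "nat \<Rightarrow> 'i" where
    a: "\<forall>n. \<not> ord_zero (\<eta>a n) \<and> \<eta>a n \<le> \<xi> \<and> Sigma0 (\<eta>a n) (- An n)" "B = (\<Union>n. An n)"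
    using assms(1) unfolding Sigma0_succ_def by blast
  have "\<forall>n. \<exists>(S::nat \<Rightarrow> 'a set) (\<theta>::nat \<Rightarrow> 'i). (\<forall>l. \<not> ord_zero (\<theta> l) \<and> \<theta> l < \<xi> \<and> Sigma0 (\<theta> l) (S l)) \<and> An n = (\<Inter>l. S l)"
    using a(1) Pi_dec assms(2) by blast
  then obtain S :: "nat \<Rightarrow> nat \<Rightarrow> 'a set" and \<theta> :: "nat \<Rightarrow> nat \<Rightarrow> 'i" where
    "\<And>n. (\<forall>l. \<not> ord_zero (\<theta> n l) \<and> \<theta> n l < \<xi> \<and> Sigma0 (\<theta> n l) (S n l)) \<and> An n = (\<Inter>l. S n l)"
    by metis
  then show ?thesis using a(2) by (intro exI[where x=S] exI[where x=\<theta>]) auto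
qed


lemma baire_meas:
  assumes "baire_class (\<xi>::'i::wellorder) (f::'a::metric_space \<Rightarrow> 'b::metric_space)"
  shows "\<forall>U. open U \<longrightarrow> Sigma0_succ \<xi> (f -` U)"
  using assms
proof (induction rule: baire_class.induct)
  case (baire_one \<xi> f)
  then show ?case by blast
next
  case (baire_lim \<xi> \<eta> fs f)
  show ?case
  proof (intro allI impI)
    fix U :: "'b set" assume U: "open U"
    define G where "G m = (\<Union>z\<in>-U. ball z (1/(Suc m)))" for m
    have Gop: "open (G m)" for m unfolding G_def by auto
    have FU: "- G m \<subseteq> U" for m using closed_inner(1)[OF U] unfolding G_def by blast
    have eq: "f -` U = (\<Union>m. \<Union>N. - (\<Union>n. fs (n + N) -` G m))"
    proof
      show "f -` U \<subseteq> (\<Union>m. \<Union>N. - (\<Union>n. fs (n + N) -` G m))"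
      proof
        fix x assume "x \<in> f -` U"
        then obtain e where e: "e > 0" "ball (f x) e \<subseteq> U" using U open_contains_ball by blast
        obtain m where m: "1/real (Suc m) < e/2" using e(1) nat_approx_posE half_gt_zero by blast
        have "(\<lambda>n. fs n x) \<longlonglongrightarrow> f x" using baire_lim.hyps(3) by blast
        then obtain N where N: "\<And>n. n \<ge> N \<Longrightarrow> dist (fs n x) (f x) < 1/Suc m"
          unfolding lim_sequentially by (meson of_nat_0_less_iff zero_less_Suc zero_less_divide_1_iff)
        have "x \<notin> fs (n + N) -` G m" for n
        proof
          assume "x \<in> fs (n + N) -` G m"
          then obtain z where z: "z \<notin> U" "dist z (fs (n+N) x) < 1/Suc m" unfolding G_def by auto
          have "dist z (f x) \<le> dist z (fs (n+N) x) + dist (fs (n+N) x) (f x)" by (rule dist_triangle)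
          also have "\<dots> < e" using z(2) N[of "n+N"] m by simp
          finally have "z \<in> ball (f x) e" by (simp add: dist_commute)
          then show False using e z by auto
        qed
        then show "x \<in> (\<Union>m. \<Union>N. - (\<Union>n. fs (n + N) -` G m))" by blast
      qed
      show "(\<Union>m. \<Union>N. - (\<Union>n. fs (n + N) -` G m)) \<subseteq> f -` U"
      proof
        fix x assume "x \<in> (\<Union>m. \<Union>N. - (\<Union>n. fs (n + N) -` G m))"
        then obtain m N where mN: "\<And>n. fs (n + N) x \<in> - G m" by blast
        have "(\<lambda>n. fs (n + N) x) \<longlonglongrightarrow> f x"
          using baire_lim.hyps(3) LIMSEQ_ignore_initial_segment by blast
        moreover have "closed (- G m)" using Gop by (simp add: closed_Compl)
        ultimately have "f x \<in> - G m" using closed_sequentially[of "- G m" "\<lambda>n. fs (n + N) x" "f x"] mN by blast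
        then show "x \<in> f -` U" using FU by auto
      qed
    qed
    have "Sigma0_succ \<xi> (- (\<Union>n. fs (n + N) -` G m))" for m N
    proof (rule Sigma0_succ_of_Pi[of \<xi>])
      show "Sigma0 \<xi> (- (- (\<Union>n. fs (n + N) -` G m)))"
        unfolding double_complement
        by (rule Sigma0_of_succ[where \<eta>="\<lambda>n. \<eta> (n + N)"]) (use baire_lim.IH Gop in auto)
    qed simp
    then show "Sigma0_succ \<xi> (f -` U)" unfolding eq by (intro Sigma0_succ_UN)
  qed
qed


lemma unif_meas:
  fixes f :: "'a::metric_space \<Rightarrow> 'b::metric_space"
  assumes nz: "\<not> ord_zero (\<xi>::'i::wellorder)" and ul: "uniform_limit UNIV fs f sequentially"
    and D: "\<And>k. Delta_succ_function \<xi> (fs k)"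
  shows "\<forall>U. open U \<longrightarrow> Sigma0_succ \<xi> (f -` U)"
proof (intro allI impI)
  fix U :: "'b set" assume U: "open U"
  have "\<forall>m. \<exists>K. \<forall>x. dist (fs K x) (f x) < 1/Suc m"
  proof
    fix m
    have "\<forall>\<^sub>F n in sequentially. \<forall>x\<in>UNIV. dist (fs n x) (f x) < 1/Suc m"
      using ul unfolding uniform_limit_iff by simp
    then show "\<exists>K. \<forall>x. dist (fs K x) (f x) < 1/Suc m" unfolding eventually_sequentially by blast
  qed
  then obtain K where K: "\<And>m x. dist (fs (K m) x) (f x) < 1/Suc m" by metis
  define Om where "Om m = (\<Union>y\<in>{y. ball y (3/Suc m) \<subseteq> U}. ball y (1/Suc m))" for m
  have Oop: "open (Om m)" for m unfolding Om_def by auto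
  have eq: "f -` U = (\<Union>m. fs (K m) -` Om m)"
  proof
    show "f -` U \<subseteq> (\<Union>m. fs (K m) -` Om m)"
    proof
      fix x assume "x \<in> f -` U"
      then obtain e where e: "e > 0" "ball (f x) e \<subseteq> U" using U open_contains_ball by blast
      obtain m where m: "1/real (Suc m) < e/3" using e(1) nat_approx_posE
        by (metis divide_pos_pos zero_less_numeral)
      have "3/real (Suc m) < e" using m by (simp add: field_simps)
      then have "ball (f x) (3/Suc m) \<subseteq> U" using e(2) by (meson order.trans less_imp_le subset_ball)
      moreover have "fs (K m) x \<in> ball (f x) (1/Suc m)" using K[of m x] by (simp add: dist_commute)
      ultimately have "fs (K m) x \<in> Om m" unfolding Om_def by blast
      then show "x \<in> (\<Union>m. fs (K m) -` Om m)" by blast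
    qed
    show "(\<Union>m. fs (K m) -` Om m) \<subseteq> f -` U"
    proof
      fix x assume "x \<in> (\<Union>m. fs (K m) -` Om m)"
      then obtain m where "fs (K m) x \<in> Om m" by blast
      then obtain y where y: "ball y (3/Suc m) \<subseteq> U" "dist y (fs (K m) x) < 1/Suc m" unfolding Om_def by auto
      have "dist y (f x) \<le> dist y (fs (K m) x) + dist (fs (K m) x) (f x)" by (rule dist_triangle)
      also have "\<dots> < 3/Suc m" using y(2) K[of m x] by (simp add: field_simps)
      finally show "x \<in> f -` U" using y(1) by auto
    qed
  qed
  have "Sigma0_succ \<xi> (fs (K m) -` Om m)" for m
    using D[of "K m"] Sigma0_succ_open[OF nz Oop] unfolding Delta_succ_function_def by blast
  then show "Sigma0_succ \<xi> (f -` U)" unfolding eq by (intro Sigma0_succ_UN)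
qed

lemma cont_delta:
  fixes g :: "'a::metric_space \<Rightarrow> 'b::metric_space"
  assumes nz: "\<not> ord_zero (\<xi>::'i::wellorder)" and L: "locally_on_Sigma_succ_partition \<xi> cont_fun g"
  shows "Delta_succ_function \<xi> g"
proof -
  obtain N C where P: "Sigma_succ_partition \<xi> N C" and LI: "locally_in_on cont_fun N C g"
    using L unfolding locally_on_Sigma_succ_partition_def by blast
  have "\<forall>n. \<exists>h. enat n < N \<longrightarrow> cont_fun h \<and> (\<forall>x\<in>C n. g x = h x)"
    using LI unfolding locally_in_on_def by blast
  then obtain H where H: "\<And>n. enat n < N \<Longrightarrow> cont_fun (H n) \<and> (\<forall>x\<in>C n. g x = H n x)" by metis
  show ?thesis unfolding Delta_succ_function_def
  proof (intro allI impI)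
    fix A :: "'b set" assume A: "Sigma0_succ \<xi> A"
    have eq: "g -` A = (\<Union>n. if enat n < N then C n \<inter> H n -` A else {})"
    proof
      show "g -` A \<subseteq> (\<Union>n. if enat n < N then C n \<inter> H n -` A else {})"
      proof
        fix x assume x: "x \<in> g -` A"
        have "x \<in> \<Union>{C n |n. enat n < N}" using P unfolding Sigma_succ_partition_def by blast
        then obtain n where n: "enat n < N" "x \<in> C n" by blast
        then have "x \<in> H n -` A" using H[OF n(1)] x by auto
        then show "x \<in> (\<Union>n. if enat n < N then C n \<inter> H n -` A else {})" using n by (intro UN_I[of n]) auto
      qed
      show "(\<Union>n. if enat n < N then C n \<inter> H n -` A else {}) \<subseteq> g -` A"
        using H by (auto split: if_splits)
    qed
    have "Sigma0_succ \<xi> (if enat n < N then C n \<inter> H n -` A else {})" for n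
    proof (cases "enat n < N")
      case True
      then have "Sigma0_succ \<xi> (C n)" using P unfolding Sigma_succ_partition_def by blast
      moreover have "Sigma0_succ \<xi> (H n -` A)"
        using Sigma0_succ_vimage[OF A] H[OF True] unfolding cont_fun_def by blast
      ultimately show ?thesis using True by (simp add: Sigma0_succ_Int)
    qed (simp add: Sigma0_succ_UNIV[OF nz])
    then show "Sigma0_succ \<xi> (g -` A)" unfolding eq by (intro Sigma0_succ_UN)
  qed
qed

lemma locally_mono:
  assumes "\<And>h. F h \<Longrightarrow> G h" "locally_on_Sigma_succ_partition \<xi> F g"
  shows "locally_on_Sigma_succ_partition \<xi> G g"
  using assms unfolding locally_on_Sigma_succ_partition_def locally_in_on_def by blast

lemma const_lip: "const_fun h \<Longrightarrow> lipschitz_fun (h::'a::metric_space \<Rightarrow> 'b::metric_space)"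
  unfolding const_fun_def lipschitz_fun_def using lipschitz_on_constant by blast

lemma lip_cont: "lipschitz_fun h \<Longrightarrow> cont_fun (h::'a::metric_space \<Rightarrow> 'b::metric_space)"
  unfolding cont_fun_def lipschitz_fun_def using lipschitz_on_continuous_on by blast

lemma mk_partition:
  fixes D :: "nat \<Rightarrow> 'a::topological_space set"
  assumes S0: "\<And>c. Sigma0_succ (\<xi>::'i::wellorder) (D c)"
    and dj: "\<And>c c'. c \<noteq> c' \<Longrightarrow> D c \<inter> D c' = {}"
    and cv: "(\<Union>c. D c) = UNIV"
    and loc: "\<And>c. \<exists>h. F h \<and> (\<forall>x\<in>D c. g x = h x)"
  shows "locally_on_Sigma_succ_partition \<xi> F g"
proof -
  define S where "S = {c. D c \<noteq> {}}"
  have Sne: "S \<noteq> {}" using cv unfolding S_def by (metis (mono_tags, lifting) UNIV_I UN_E empty_Collect_eq empty_iff)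
  have "\<exists>(N::enat) (e::nat \<Rightarrow> nat). 1 \<le> N \<and> bij_betw e {n. enat n < N} S"
  proof (cases "finite S")
    case True
    then obtain e where "bij_betw e {0..<card S} S" using ex_bij_betw_nat_finite by blast
    moreover have "{n. enat n < enat (card S)} = {0..<card S}" by auto
    moreover have "1 \<le> enat (card S)" using True Sne
      by (metis card_0_eq enat_ord_simps(1) less_one linorder_not_less one_enat_def)
    ultimately show ?thesis by metis
  next
    case False
    then have "bij_betw (enumerate S) UNIV S" by (rule bij_enumerate)
    moreover have "{n. enat n < \<infinity>} = UNIV" by auto
    ultimately show ?thesis by (metis enat_ord_code(3))
  qed
  then obtain N :: enat and e where N1: "1 \<le> N" and bij: "bij_betw e {n. enat n < N} S" by blast
  have P: "Sigma_succ_partition \<xi> N (\<lambda>n. D (e n))"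
    unfolding Sigma_succ_partition_def
  proof (intro conjI allI impI)
    show "1 \<le> N" by (rule N1)
    fix n assume "enat n < N"
    then have "e n \<in> S" using bij bij_betw_apply by fastforce
    then show "D (e n) \<noteq> {}" unfolding S_def by simp
    show "Sigma0_succ \<xi> (D (e n))" by (rule S0)
  next
    fix m n assume "enat m < N" "enat n < N" "m \<noteq> n"
    then have "e m \<noteq> e n" using bij unfolding bij_betw_def inj_on_def by blast
    then show "D (e m) \<inter> D (e n) = {}" by (rule dj)
  next
    show "\<Union> {D (e n) |n. enat n < N} = UNIV"
    proof (rule set_eqI, rule iffI)
      fix x :: 'a
      assume "x \<in> UNIV"
      then obtain c where c: "x \<in> D c" using cv by blast
      then have "c \<in> S" unfolding S_def by auto
      then obtain n where "enat n < N" "e n = c" using bij unfolding bij_betw_def by auto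
      then show "x \<in> \<Union> {D (e n) |n. enat n < N}" using c by blast
    qed simp
  qed
  have "locally_in_on F N (\<lambda>n. D (e n)) g"
    unfolding locally_in_on_def using loc by blast
  then show ?thesis unfolding locally_on_Sigma_succ_partition_def using P by blast
qed


lemma dense_seq:
  assumes "\<exists>D::'b::metric_space set. countable D \<and> closure D = UNIV"
  shows "\<exists>d::nat \<Rightarrow> 'b. \<forall>y r. r > 0 \<longrightarrow> (\<exists>i. dist (d i) y < r)"
proof -
  obtain D :: "'b set" where D: "countable D" "closure D = UNIV" using assms by blast
  have ne: "D \<noteq> {}" using D(2) by auto
  have "\<forall>y r. r > 0 \<longrightarrow> (\<exists>i. dist (from_nat_into D i) y < r)"
  proof (intro allI impI)
    fix y :: 'b and r :: real assume "r > 0"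
    have "y \<in> closure D" using D(2) by simp
    then obtain z where "z \<in> D" "dist z y < r" using \<open>r > 0\<close> closure_approachable by blast
    moreover have "z \<in> range (from_nat_into D)" using \<open>z \<in> D\<close> ne D(1) by simp
    ultimately show "\<exists>i. dist (from_nat_into D i) y < r" by auto
  qed
  then show ?thesis by blast
qed

lemma sat_lemma:
  assumes "finite F" "\<forall>T\<in>F. P T" "P UNIV" "P {}"
    "\<And>A B T. P A \<Longrightarrow> P B \<Longrightarrow> P T \<Longrightarrow> P ((T \<inter> A) \<union> (-T \<inter> B))"
  shows "(\<forall>x y. (\<forall>T\<in>F. x\<in>T \<longleftrightarrow> y\<in>T) \<longrightarrow> x\<in>S \<longrightarrow> y\<in>S) \<Longrightarrow> P S"
  using assms(1,2)
proof (induction F arbitrary: S rule: finite_induct)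
  case empty
  then have "S = {} \<or> S = UNIV" by blast
  then show ?case using assms(3,4) by blast
next
  case (insert T F)
  define S1 where "S1 = {x. \<exists>y\<in>S. y \<in> T \<and> (\<forall>T'\<in>F. x\<in>T' \<longleftrightarrow> y\<in>T')}"
  define S2 where "S2 = {x. \<exists>y\<in>S. y \<notin> T \<and> (\<forall>T'\<in>F. x\<in>T' \<longleftrightarrow> y\<in>T')}"
  have "P S1" using insert by (intro insert.IH) (auto simp: S1_def)
  moreover have "P S2" using insert by (intro insert.IH) (auto simp: S2_def)
  moreover have "P T" using insert by auto
  moreover have "S = (T \<inter> S1) \<union> (-T \<inter> S2)"
  proof
    show "S \<subseteq> (T \<inter> S1) \<union> (-T \<inter> S2)" unfolding S1_def S2_def by blast
    show "(T \<inter> S1) \<union> (-T \<inter> S2) \<subseteq> S"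
    proof
      fix x assume "x \<in> (T \<inter> S1) \<union> (-T \<inter> S2)"
      then obtain y where "y \<in> S" "x \<in> T \<longleftrightarrow> y \<in> T" "\<forall>T'\<in>F. x\<in>T' \<longleftrightarrow> y\<in>T'"
        unfolding S1_def S2_def by blast
      then show "x \<in> S" using insert.prems(1) by blast
    qed
  qed
  ultimately show ?case using assms(5) by metis
qed

lemma step_const:
  fixes f :: "'a::metric_space \<Rightarrow> 'b::metric_space" and d :: "nat \<Rightarrow> 'b"
  assumes nz: "\<not> ord_zero (\<xi>::'i::wellorder)"
    and meas: "\<forall>U. open U \<longrightarrow> Sigma0_succ \<xi> (f -` U)"
    and dense: "\<forall>y r. r > 0 \<longrightarrow> (\<exists>i. dist (d i) y < r)"
    and r: "r > 0"
  shows "\<exists>g. (\<forall>x. dist (g x) (f x) < r) \<and> locally_on_Sigma_succ_partition \<xi> const_fun g"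
proof -
  have "\<forall>i. \<exists>(P::nat \<Rightarrow> 'a set) (\<eta>::nat \<Rightarrow> 'i). (\<forall>j. \<not> ord_zero (\<eta> j) \<and> \<eta> j \<le> \<xi> \<and> Sigma0 (\<eta> j) (- P j))
      \<and> f -` ball (d i) r = (\<Union>j. P j)"
    using meas unfolding Sigma0_succ_def by (meson open_ball)
  then obtain P :: "nat \<Rightarrow> nat \<Rightarrow> 'a set" and \<eta> :: "nat \<Rightarrow> nat \<Rightarrow> 'i" where
    PP: "\<And>i j. \<not> ord_zero (\<eta> i j) \<and> \<eta> i j \<le> \<xi> \<and> Sigma0 (\<eta> i j) (- P i j)"
    "\<And>i. f -` ball (d i) r = (\<Union>j. P i j)"
    by metis
  define P' where "P' c = P (fst (prod_decode c)) (snd (prod_decode c))" for c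
  define Dc where "Dc c = P' c \<inter> (\<Inter>c'\<in>{..<c}. - P' c')" for c
  define L where "L x = (LEAST c. x \<in> P' c)" for x
  define g where "g x = d (fst (prod_decode (L x)))" for x
  have cov: "\<exists>c. x \<in> P' c" for x
  proof -
    obtain i where "dist (d i) (f x) < r" using dense r by blast
    then have "x \<in> f -` ball (d i) r" by simp
    then obtain j where "x \<in> P i j" using PP(2) by blast
    then have "x \<in> P' (prod_encode (i,j))" unfolding P'_def by simp
    then show ?thesis by blast
  qed
  have LP: "x \<in> P' (L x)" for x unfolding L_def using cov LeastI_ex by metis
  have inD: "x \<in> Dc c \<longleftrightarrow> c = L x" for x c
  proof
    assume a: "x \<in> Dc c"
    show "c = L x" unfolding L_def
    proof (rule Least_equality[symmetric])
      show "x \<in> P' c" using a unfolding Dc_def by blast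
      fix c' assume "x \<in> P' c'"
      show "c \<le> c'"
      proof (rule ccontr)
        assume "\<not> c \<le> c'"
        then have "c' \<in> {..<c}" by simp
        then have "x \<in> - P' c'" using a unfolding Dc_def by blast
        then show False using \<open>x \<in> P' c'\<close> by simp
      qed
    qed
  next
    assume "c = L x"
    have "x \<in> - P' c'" if "c' < L x" for c'
      using not_less_Least[of c' "\<lambda>c. x \<in> P' c"] that unfolding L_def by simp
    then show "x \<in> Dc c" unfolding Dc_def using LP \<open>c = L x\<close> by blast
  qed
  have SD: "Sigma0_succ \<xi> (Dc c)" for c
  proof -
    have "Sigma0_succ \<xi> (P' c)" unfolding P'_def using PP(1) Sigma0_succ_of_Pi by blast
    moreover have "Sigma0_succ \<xi> (\<Inter>c'\<in>{..<n}. - P' c')" for n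
    proof (induction n)
      case 0
      then show ?case using Sigma0_succ_UNIV[OF nz] by simp
    next
      case (Suc n)
      have "Sigma0_succ \<xi> (- P' n)" unfolding P'_def using PP(1) Sigma0_succ_of_Sigma0 by blast
      then show ?case using Suc by (simp add: lessThan_Suc Sigma0_succ_Int Int_commute)
    qed
    ultimately show ?thesis unfolding Dc_def by (simp add: Sigma0_succ_Int)
  qed
  have part: "locally_on_Sigma_succ_partition \<xi> const_fun g"
  proof (rule mk_partition[where D=Dc])
    show "\<And>c. Sigma0_succ \<xi> (Dc c)" by (rule SD)
    show "\<And>c c'. c \<noteq> c' \<Longrightarrow> Dc c \<inter> Dc c' = {}" by (auto simp add: inD)
    show "(\<Union>c. Dc c) = UNIV" by (auto simp add: inD)
    fix c
    show "\<exists>h. const_fun h \<and> (\<forall>x\<in>Dc c. g x = h x)"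
      by (rule exI[where x="\<lambda>_. d (fst (prod_decode c))"]) (auto simp: const_fun_def g_def inD)
  qed
  have "dist (g x) (f x) < r" for x
  proof -
    have "x \<in> P (fst (prod_decode (L x))) (snd (prod_decode (L x)))" using LP[of x] unfolding P'_def .
    then have "x \<in> f -` ball (d (fst (prod_decode (L x)))) r" using PP(2) by blast
    then show ?thesis unfolding g_def by simp
  qed
  then show ?thesis using part by blast
qed

lemma approx_const:
  fixes f :: "'a::metric_space \<Rightarrow> 'b::metric_space"
  assumes sep: "\<exists>D::'b set. countable D \<and> closure D = UNIV"
    and nz: "\<not> ord_zero (\<xi>::'i::wellorder)"
    and meas: "\<forall>U. open U \<longrightarrow> Sigma0_succ \<xi> (f -` U)"
  shows "\<exists>fs. uniform_limit UNIV fs f sequentially \<and> (\<forall>k. locally_on_Sigma_succ_partition \<xi> const_fun (fs k))"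
proof -
  obtain d :: "nat \<Rightarrow> 'b" where dense: "\<forall>y r. r > 0 \<longrightarrow> (\<exists>i. dist (d i) y < r)" using dense_seq[OF sep] by blast
  have "\<forall>k. \<exists>g. (\<forall>x. dist (g x) (f x) < 1/Suc k) \<and> locally_on_Sigma_succ_partition \<xi> const_fun g"
    using step_const[OF nz meas dense] by simp
  then obtain fs where fs: "\<And>k. (\<forall>x. dist (fs k x) (f x) < 1/Suc k) \<and> locally_on_Sigma_succ_partition \<xi> const_fun (fs k)"
    by metis
  have "uniform_limit UNIV fs f sequentially"
    unfolding uniform_limit_iff
  proof (intro allI impI)
    fix e :: real assume "e > 0"
    then obtain k0 where k0: "1/real (Suc k0) < e" using nat_approx_posE by blast
    have "\<forall>k\<ge>k0. \<forall>x\<in>UNIV. dist (fs k x) (f x) < e"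
    proof (intro allI impI ballI)
      fix k x assume "k \<ge> k0"
      then have "1/real (Suc k) \<le> 1/real (Suc k0)" by (simp add: frac_le)
      moreover have "dist (fs k x) (f x) < 1/real (Suc k)" using fs[of k] by blast
      ultimately show "dist (fs k x) (f x) < e" using k0 by linarith
    qed
    then show "\<forall>\<^sub>F n in sequentially. \<forall>x\<in>UNIV. dist (fs n x) (f x) < e"
      unfolding eventually_sequentially by blast
  qed
  then show ?thesis using fs by blast
qed


lemma meas_baire:
  fixes f :: "'a::metric_space \<Rightarrow> 'b::metric_space"
  assumes sep: "\<exists>D::'b set. countable D \<and> closure D = UNIV"
  shows "\<not> ord_zero (\<xi>::'i::wellorder) \<Longrightarrow> (\<forall>U. open U \<longrightarrow> Sigma0_succ \<xi> (f -` U)) \<Longrightarrow> baire_class \<xi> f"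
proof (induction \<xi> arbitrary: f rule: less_induct)
  case (less \<xi> f)
  show ?case
  proof (cases "ord_one \<xi>")
    case True
    then show ?thesis using less.prems by (intro baire_one) auto
  next
    case notone: False
    obtain d :: "nat \<Rightarrow> 'b" where dense: "\<forall>y r. r > 0 \<longrightarrow> (\<exists>i. dist (d i) y < r)"
      using dense_seq[OF sep] by blast
    define r where "r k = 1 / real (Suc k)" for k :: nat
    have rpos: "r k > 0" for k unfolding r_def by simp
    have r_mono: "k \<le> k' \<Longrightarrow> r k' \<le> r k" for k k' unfolding r_def by (simp add: frac_le)
    have "\<forall>k i. \<exists>(S::nat \<Rightarrow> nat \<Rightarrow> 'a set) (\<theta>::nat \<Rightarrow> nat \<Rightarrow> 'i).
       (\<forall>j l. \<not> ord_zero (\<theta> j l) \<and> \<theta> j l < \<xi> \<and> Sigma0 (\<theta> j l) (S j l)) \<and> f -` ball (d i) (r k) = (\<Union>j. \<Inter>l. S j l)"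
    proof (intro allI)
      fix k i
      have "Sigma0_succ \<xi> (f -` ball (d i) (r k))" using less.prems(2) by simp
      then show "\<exists>(S::nat \<Rightarrow> nat \<Rightarrow> 'a set) (\<theta>::nat \<Rightarrow> nat \<Rightarrow> 'i).
       (\<forall>j l. \<not> ord_zero (\<theta> j l) \<and> \<theta> j l < \<xi> \<and> Sigma0 (\<theta> j l) (S j l)) \<and> f -` ball (d i) (r k) = (\<Union>j. \<Inter>l. S j l)"
        using Dec[OF _ notone] by blast
    qed
    then obtain S :: "nat \<Rightarrow> nat \<Rightarrow> nat \<Rightarrow> nat \<Rightarrow> 'a set" and \<theta> :: "nat \<Rightarrow> nat \<Rightarrow> nat \<Rightarrow> nat \<Rightarrow> 'i" where
      SS: "\<And>k i. (\<forall>j l. \<not> ord_zero (\<theta> k i j l) \<and> \<theta> k i j l < \<xi> \<and> Sigma0 (\<theta> k i j l) (S k i j l))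
             \<and> f -` ball (d i) (r k) = (\<Union>j. \<Inter>l. S k i j l)"
      by metis
    have SSeq: "f -` ball (d i) (r k) = (\<Union>j. \<Inter>l. S k i j l)" for k i using SS[of k i] by (rule conjunct2)
    define T where "T k c l = S k (fst (prod_decode c)) (snd (prod_decode c)) l" for k c l
    define Th where "Th k c l = \<theta> k (fst (prod_decode c)) (snd (prod_decode c)) l" for k c l
    have TT: "\<not> ord_zero (Th k c l) \<and> Th k c l < \<xi> \<and> Sigma0 (Th k c l) (T k c l)" for k c l
      unfolding T_def Th_def using SS by blast
    define inm where "inm k m x c = (\<forall>l\<le>m. x \<in> T k c l)" for k m x c
    define iota where "iota k m x = (if \<exists>c<m. inm k m x c then fst (prod_decode (LEAST c. c < m \<and> inm k m x c)) else 0)" for k m x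
    define cons where "cons m x k = (\<forall>j\<le>k. \<forall>j'\<le>k. dist (d (iota j m x)) (d (iota j' m x)) < r j + r j')" for m x k
    define ks where "ks m x = (GREATEST k. k \<le> m \<and> cons m x k)" for m x
    define h where "h m x = d (iota (ks m x) m x)" for m x
    define Z where "Z m = Max ((\<lambda>(k,c,l). Th k c l) ` ({..m} \<times> {..m} \<times> {..m}))" for m

    have cons0: "cons m x 0" for m x unfolding cons_def using rpos by simp
    have ks1: "ks m x \<le> m \<and> cons m x (ks m x)" for m x
    proof -
      have "0 \<le> m \<and> cons m x 0" using cons0 by simp
      moreover have "\<And>y. y \<le> m \<and> cons m x y \<Longrightarrow> y \<le> m" by blast
      ultimately show ?thesis unfolding ks_def using GreatestI_nat[of "\<lambda>k. k \<le> m \<and> cons m x k" 0 m] by blast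
    qed
    have ks2: "k \<le> ks m x" if "k \<le> m" "cons m x k" for m x k
    proof -
      have "\<And>y. y \<le> m \<and> cons m x y \<Longrightarrow> y \<le> m" by blast
      then show ?thesis unfolding ks_def using Greatest_le_nat[of "\<lambda>k. k \<le> m \<and> cons m x k" k m] that by blast
    qed

    have P1: "\<forall>\<^sub>F m in sequentially. dist (d (iota k m x)) (f x) < r k" for k x
    proof -
      have "\<exists>i. dist (d i) (f x) < r k" using dense rpos[of k] by blast
      then obtain i where "dist (d i) (f x) < r k" by blast
      then have "x \<in> f -` ball (d i) (r k)" by (simp add: mem_ball)
      then have "x \<in> (\<Union>j. \<Inter>l. S k i j l)" unfolding SSeq .
      then obtain j where j: "\<forall>l. x \<in> S k i j l" by blast
      define c0 where "c0 = prod_encode (i,j)"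
      have Tc0: "\<forall>l. x \<in> T k c0 l" unfolding T_def c0_def using j by simp
      have ev1: "\<forall>\<^sub>F m in sequentially. \<forall>c\<in>{..c0}. (\<forall>l. x \<in> T k c l) \<or> \<not> inm k m x c"
      proof (rule eventually_ball_finite)
        show "finite {..c0}" by simp
        show "\<forall>c\<in>{..c0}. \<forall>\<^sub>F m in sequentially. (\<forall>l. x \<in> T k c l) \<or> \<not> inm k m x c"
        proof
          fix c
          show "\<forall>\<^sub>F m in sequentially. (\<forall>l. x \<in> T k c l) \<or> \<not> inm k m x c"
          proof (cases "\<forall>l. x \<in> T k c l")
            case True then show ?thesis by simp
          next
            case False
            then obtain l0 where "x \<notin> T k c l0" by blast
            then have "\<forall>m\<ge>l0. \<not> inm k m x c" unfolding inm_def by blast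
            then show ?thesis unfolding eventually_sequentially by blast
          qed
        qed
      qed
      have ev2: "\<forall>\<^sub>F m in sequentially. c0 < m" by (rule eventually_gt_at_top)
      show ?thesis
      proof (rule eventually_mono[OF eventually_conj[OF ev1 ev2]])
        fix m assume A: "(\<forall>c\<in>{..c0}. (\<forall>l. x \<in> T k c l) \<or> \<not> inm k m x c) \<and> c0 < m"
        have i0: "c0 < m \<and> inm k m x c0" using A Tc0 unfolding inm_def by blast
        then have ex: "\<exists>c<m. inm k m x c" by blast
        define cs where "cs = (LEAST c. c < m \<and> inm k m x c)"
        have cs1: "cs < m \<and> inm k m x cs" unfolding cs_def by (rule LeastI[of _ c0]) (rule i0)
        have cs2: "cs \<le> c0" unfolding cs_def by (rule Least_le) (rule i0)
        have "\<forall>l. x \<in> T k cs l" using A cs1 cs2 by auto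
        then have "x \<in> (\<Union>j. \<Inter>l. S k (fst (prod_decode cs)) j l)" unfolding T_def by blast
        then have "x \<in> f -` ball (d (fst (prod_decode cs))) (r k)" unfolding SSeq .
        moreover have "iota k m x = fst (prod_decode cs)" unfolding iota_def cs_def using ex by simp
        ultimately show "dist (d (iota k m x)) (f x) < r k" by simp
      qed
    qed

    have conv: "(\<lambda>m. h m x) \<longlonglongrightarrow> f x" for x
      unfolding tendsto_iff
    proof (intro allI impI)
      fix e :: real assume "e > 0"
      then obtain K where K: "1/real (Suc K) < e/3" using nat_approx_posE
        by (metis divide_pos_pos zero_less_numeral)
      then have rK: "r K < e/3" unfolding r_def .
      have ev: "\<forall>\<^sub>F m in sequentially. (\<forall>k\<in>{..K}. dist (d (iota k m x)) (f x) < r k) \<and> K \<le> m"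
        by (intro eventually_conj eventually_ball_finite eventually_ge_at_top) (use P1 in auto)
      show "\<forall>\<^sub>F m in sequentially. dist (h m x) (f x) < e"
      proof (rule eventually_mono[OF ev])
        fix m assume A: "(\<forall>k\<in>{..K}. dist (d (iota k m x)) (f x) < r k) \<and> K \<le> m"
        have cK: "cons m x K" unfolding cons_def
        proof (intro allI impI)
          fix j j' assume "j \<le> K" "j' \<le> K"
          then have "dist (d (iota j m x)) (f x) < r j" "dist (d (iota j' m x)) (f x) < r j'" using A by auto
          moreover have "dist (d (iota j m x)) (d (iota j' m x)) \<le> dist (d (iota j m x)) (f x) + dist (d (iota j' m x)) (f x)"
            by (rule dist_triangle2)
          ultimately show "dist (d (iota j m x)) (d (iota j' m x)) < r j + r j'" by linarith
        qed
        define k' where "k' = ks m x"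
        have k'1: "K \<le> k'" unfolding k'_def using ks2 cK A by blast
        have k'2: "cons m x k'" unfolding k'_def using ks1 by blast
        have "dist (d (iota k' m x)) (d (iota K m x)) < r k' + r K" using k'2 k'1 unfolding cons_def by blast
        moreover have "r k' \<le> r K" using r_mono k'1 by blast
        moreover have "dist (d (iota K m x)) (f x) < r K" using A by auto
        moreover have "dist (h m x) (f x) \<le> dist (d (iota k' m x)) (d (iota K m x)) + dist (d (iota K m x)) (f x)"
          unfolding h_def k'_def by (rule dist_triangle)
        ultimately show "dist (h m x) (f x) < e" using rK by linarith
      qed
    qed

    have Zin: "Z m \<in> (\<lambda>(k,c,l). Th k c l) ` ({..m} \<times> {..m} \<times> {..m})" for m
      unfolding Z_def by (rule Max_in) auto
    have Zlt: "Z m < \<xi>" and Znz: "\<not> ord_zero (Z m)" for m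
      using Zin[of m] TT by auto
    have Zge: "Th k c l \<le> Z m" if "k \<le> m" "c \<le> m" "l \<le> m" for k c l m
    proof -
      have "Th k c l \<in> (\<lambda>(k,c,l). Th k c l) ` ({..m} \<times> {..m} \<times> {..m})"
        by (rule image_eqI[where x="(k,c,l)"]) (use that in auto)
      then show ?thesis unfolding Z_def by (intro Max_ge) auto
    qed

    have hmeas: "Sigma0_succ (Z m) (h m -` U)" if "open U" for m U
    proof -
      define F where "F = (\<lambda>(k,c,l). T k c l) ` ({..m} \<times> {..m} \<times> {..m})"
      define Pd where "Pd B = (Sigma0_succ (Z m) B \<and> Sigma0_succ (Z m) (- B))" for B :: "'a set"
      have sat: "\<forall>x y. (\<forall>T\<in>F. x\<in>T \<longleftrightarrow> y\<in>T) \<longrightarrow> x \<in> h m -` U \<longrightarrow> y \<in> h m -` U"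
      proof (intro allI impI)
        fix x y assume agree: "\<forall>T\<in>F. x\<in>T \<longleftrightarrow> y\<in>T" and xin: "x \<in> h m -` U"
        have inm_eq: "inm k m x c = inm k m y c" if "k \<le> m" "c < m" for k c
        proof -
          have "x \<in> T k c l \<longleftrightarrow> y \<in> T k c l" if "l \<le> m" for l
            using agree \<open>k \<le> m\<close> \<open>c < m\<close> that unfolding F_def by auto
          then show ?thesis unfolding inm_def by blast
        qed
        have iota_eq: "iota k m x = iota k m y" if "k \<le> m" for k
        proof -
          have eqP: "(\<lambda>c. c < m \<and> inm k m x c) = (\<lambda>c. c < m \<and> inm k m y c)"
            using inm_eq[OF that] by auto
          have "(\<exists>c<m. inm k m x c) = (\<exists>c<m. inm k m y c)" using inm_eq[OF that] by blast
          then show ?thesis unfolding iota_def eqP by simp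
        qed
        have cons_eq: "cons m x k = cons m y k" if "k \<le> m" for k
        proof -
          have "\<forall>j\<le>k. iota j m x = iota j m y" using iota_eq that by auto
          then show ?thesis unfolding cons_def by auto
        qed
        have "(\<lambda>k. k \<le> m \<and> cons m x k) = (\<lambda>k. k \<le> m \<and> cons m y k)" using cons_eq by auto
        then have kseq: "ks m x = ks m y" unfolding ks_def by simp
        have "h m x = h m y" unfolding h_def kseq using iota_eq ks1 by simp
        then show "y \<in> h m -` U" using xin by simp
      qed
      have "Pd (h m -` U)"
      proof (rule sat_lemma[where F=F and P=Pd, OF _ _ _ _ _ sat])
        show "finite F" unfolding F_def by simp
        show "\<forall>T\<in>F. Pd T"
        proof
          fix B assume "B \<in> F"
          then obtain k c l where kcl: "k \<le> m" "c \<le> m" "l \<le> m" "B = T k c l" unfolding F_def by auto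
          have le: "Th k c l \<le> Z m" using Zge kcl by blast
          have s: "Sigma0 (Th k c l) B" using TT kcl(4) by blast
          show "Pd B" unfolding Pd_def
            using Sigma0_succ_of_Sigma0[OF s le] Sigma0_succ_of_Pi[of "Th k c l" "- B"] s le by simp
        qed
        show "Pd UNIV" "Pd {}" unfolding Pd_def using Sigma0_succ_UNIV[OF Znz[of m]] by auto
        fix A B C assume "Pd A" "Pd B" "Pd C"
        moreover have "- ((C \<inter> A) \<union> (-C \<inter> B)) = (C \<inter> -A) \<union> (-C \<inter> -B)" by blast
        ultimately show "Pd ((C \<inter> A) \<union> (-C \<inter> B))" unfolding Pd_def
          by (simp add: Sigma0_succ_Int Sigma0_succ_Un)
      qed
      then show ?thesis unfolding Pd_def by blast
    qed

    show ?thesis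
    proof (rule baire_lim[where \<eta>=Z and fs=h])
      show "\<not> ord_zero \<xi>" by (rule less.prems(1))
      show "\<not> ord_one \<xi>" by (rule notone)
      show "\<forall>n. \<not> ord_zero (Z n) \<and> Z n < \<xi> \<and> baire_class (Z n) (h n)"
        using Znz Zlt hmeas less.IH by blast
      show "\<forall>x. (\<lambda>n. h n x) \<longlonglongrightarrow> f x" using conv by blast
    qed
  qed
qed


theorem mainTheorem10:
  fixes \<xi> :: "'i::wellorder" and f :: "'a::metric_space \<Rightarrow> 'b::metric_space"
  assumes sep: "\<exists>D::'b set. countable D \<and> closure D = UNIV"
    and countable_ord: "countable {..\<xi>}"
    and ge1: "\<not> ord_zero \<xi>"
  shows "(baire_class \<xi> f \<longleftrightarrow>
            (\<exists>fs. uniform_limit UNIV fs f sequentially \<and>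
               (\<forall>k. locally_on_Sigma_succ_partition \<xi> const_fun (fs k))))
       \<and> (baire_class \<xi> f \<longleftrightarrow>
            (\<exists>fs. uniform_limit UNIV fs f sequentially \<and>
               (\<forall>k. locally_on_Sigma_succ_partition \<xi> lipschitz_fun (fs k))))
       \<and> (baire_class \<xi> f \<longleftrightarrow>
            (\<exists>fs. uniform_limit UNIV fs f sequentially \<and>
               (\<forall>k. locally_on_Sigma_succ_partition \<xi> cont_fun (fs k))))
       \<and> (baire_class \<xi> f \<longleftrightarrow>
            (\<exists>fs. uniform_limit UNIV fs f sequentially \<and>
               (\<forall>k. Delta_succ_function \<xi> (fs k))))"
proof -
  let ?i = "baire_class \<xi> f"
  let ?ii = "\<exists>fs. uniform_limit UNIV fs f sequentially \<and> (\<forall>k. locally_on_Sigma_succ_partition \<xi> const_fun (fs k))"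
  let ?iii = "\<exists>fs. uniform_limit UNIV fs f sequentially \<and> (\<forall>k. locally_on_Sigma_succ_partition \<xi> lipschitz_fun (fs k))"
  let ?iv = "\<exists>fs. uniform_limit UNIV fs f sequentially \<and> (\<forall>k. locally_on_Sigma_succ_partition \<xi> cont_fun (fs k))"
  let ?v = "\<exists>fs. uniform_limit UNIV fs f sequentially \<and> (\<forall>k. Delta_succ_function \<xi> (fs k))"
  have 1: "?i \<Longrightarrow> ?ii" using approx_const[OF sep ge1] baire_meas by blast
  have 2: "?ii \<Longrightarrow> ?iii" using locally_mono[of const_fun lipschitz_fun] const_lip by blast
  have 3: "?iii \<Longrightarrow> ?iv" using locally_mono[of lipschitz_fun cont_fun] lip_cont by blast
  have 4: "?iv \<Longrightarrow> ?v" using cont_delta[OF ge1] by blast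
  have 5: "?v \<Longrightarrow> ?i" using meas_baire[OF sep ge1] unif_meas[OF ge1] by blast
  show ?thesis using 1 2 3 4 5 by blast
qed

end
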